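(* Let $\mathbf{G}=(\mathcal{V},\mathcal{E})$ be a directed graph on $\mathcal{V}=\{1,\dots,m\}$, let $a>0$, let $x=(x_1,\dots,x_m)\in[0,a)^m$ be fixed, and let $\{r_{ij}\}_{(i,j)\in\mathcal{E}}$ be independent random variables, each uniform on $[0,ma)$. Define $t_i=\mathrm{mod}\big(\sum_{j:(j,i)\in\mathcal{E}} r_{ji}-\sum_{j:(i,j)\in\mathcal{E}} r_{ij},\,ma\big)$ and $\tilde{x}_i=\mathrm{mod}(x_i+t_i,ma)$. If the undirected graph $\bar{\mathbf{G}}$ is connected, then the perturbed inputs $(\tilde{x}_1,\dots,\tilde{x}_m)$ are uniformly distributed over $[0,ma)^m$ subject to the constraint $\mathrm{mod}\big(\sum_{i=1}^m\tilde{x}_i,ma\big)=\sum_{i=1}^m x_i$.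
   Context: $\bar{\mathbf{G}}$ is the undirected graph on $\mathcal{V}$ obtained from $\mathbf{G}$ by ignoring edge orientations. For $a'>0$ and real $y$, $\mathrm{mod}(y,a')=y-pa'$ where $p$ is the unique integer with $y-pa'\in[0,a')$. *)

theory Defs
  imports "HOL-Probability.Probability"
begin

definition rmod :: "real \<Rightarrow> real \<Rightarrow> real" where
  "rmod y a' = y - a' * of_int \<lfloor>y / a'\<rfloor>"

definition undirected_connected :: "nat set \<Rightarrow> (nat \<times> nat) set \<Rightarrow> bool" where
  "undirected_connected V E \<longleftrightarrow> (\<forall>i\<in>V. \<forall>j\<in>V. (i, j) \<in> (E \<union> E\<inverse>)\<^sup>*)"

text \<open>Uniform distribution on [0,c)^m (coordinates 1..m) subject to mod(sum_i y_i, c) = s: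
  the first m-1 coordinates are i.i.d. uniform on [0,c) and the last coordinate is the unique
  value in [0,c) fulfilling the constraint.\<close>
definition constrained_uniform :: "nat \<Rightarrow> real \<Rightarrow> real \<Rightarrow> (nat \<Rightarrow> real) measure" where
  "constrained_uniform m c s =
     distr (PiM {1..<m} (\<lambda>_. uniform_measure lborel {0..<c}))
           (PiM {1..m} (\<lambda>_. borel))
           (\<lambda>y. restrict (y(m := rmod (s - (\<Sum>i\<in>{1..<m}. y i)) c)) {1..m})"

definition tshift :: "nat \<Rightarrow> real \<Rightarrow> (nat \<times> nat) set \<Rightarrow> nat \<Rightarrow> (nat \<times> nat \<Rightarrow> real) \<Rightarrow> real" where
  "tshift m a E i r = rmod ((\<Sum>j\<in>{j\<in>{1..m}. (j, i) \<in> E}. r (j, i))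
                          - (\<Sum>j\<in>{j\<in>{1..m}. (i, j) \<in> E}. r (i, j))) (real m * a)"

definition perturbed :: "nat \<Rightarrow> real \<Rightarrow> (nat \<times> nat) set \<Rightarrow> (nat \<Rightarrow> real) \<Rightarrow> (nat \<times> nat \<Rightarrow> real) \<Rightarrow> (nat \<Rightarrow> real)" where
  "perturbed m a E x r = (\<lambda>i\<in>{1..m}. rmod (x i + tshift m a E i r) (real m * a))"

end

theory Submission
  imports Defs
begin

lemma rmod_range: assumes "(c::real) > 0" shows "0 \<le> rmod y c" "rmod y c < c"
proof -
  have "of_int \<lfloor>y/c\<rfloor> \<le> y/c" "y/c < of_int \<lfloor>y/c\<rfloor> + 1" by linarith+
  then have "c * of_int \<lfloor>y/c\<rfloor> \<le> c * (y/c)" "c * (y/c) < c * (of_int \<lfloor>y/c\<rfloor> + 1)"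
    using assms by (intro mult_left_mono mult_strict_left_mono; simp)+
  then have "c * of_int \<lfloor>y/c\<rfloor> \<le> y" "y < c * of_int \<lfloor>y/c\<rfloor> + c"
    using assms by (auto simp: algebra_simps)
  then show "0 \<le> rmod y c" "rmod y c < c" unfolding rmod_def by auto
qed

lemma rmod_eq: assumes "(c::real) > 0" "0 \<le> y - c * of_int k" "y - c * of_int k < c"
  shows "rmod y c = y - c * of_int k"
proof -
  have "of_int k \<le> y / c" "y/c < of_int k + 1" using assms by (auto simp: field_simps)
  then have "\<lfloor>y/c\<rfloor> = k" by (simp add: floor_eq_iff)
  then show ?thesis by (simp add: rmod_def)
qed

lemma rmod_shift: assumes "(c::real) > 0" shows "rmod (y + c * of_int k) c = rmod y c"
proof -
  have "rmod (y + c * of_int k) c = (y + c * of_int k) - c * of_int (\<lfloor>y/c\<rfloor> + k)"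
    apply (rule rmod_eq[OF assms])
    using rmod_range[OF assms, of y] by (auto simp: rmod_def algebra_simps)
  then show ?thesis by (simp add: rmod_def algebra_simps)
qed

lemma rmod_cong: assumes "(c::real) > 0" "y - y' = c * of_int k" shows "rmod y c = rmod y' c"
proof -
  have "y = y' + c * of_int k" using assms by simp
  then show ?thesis using rmod_shift[OF assms(1)] by simp
qed

lemma rmod_add_rmod: assumes "(c::real) > 0" shows "rmod (rmod y c + z) c = rmod (y + z) c"
  by (rule rmod_cong[OF assms, of _ _ "- \<lfloor>y/c\<rfloor>"]) (simp add: rmod_def)

lemma rmod_id: assumes "(c::real) > 0" "0 \<le> y" "y < c" shows "rmod y c = y"
  using rmod_eq[OF assms(1), of y 0] assms by simp

lemma measurable_rmod[measurable]: "(\<lambda>y. rmod y c) \<in> borel_measurable borel"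
  unfolding rmod_def by measurable


lemma lborel_transl: "B \<in> sets borel \<Longrightarrow> emeasure lborel ((+) (t::real) -` B) = emeasure lborel B"
proof -
  assume B: "B \<in> sets borel"
  have "emeasure (distr lborel borel ((+) t)) B = emeasure lborel ((+) t -` B \<inter> space lborel)"
    using B by (intro emeasure_distr) auto
  then show ?thesis by (simp add: lborel_distr_plus)
qed

lemma key1d:
  assumes c: "(c::real) > 0" and A: "A \<in> sets borel"
  shows "emeasure lborel ({0..<c} \<inter> (\<lambda>u. rmod (u + z) c) -` A) = emeasure lborel ({0..<c} \<inter> A)"
proof -
  define w where "w = rmod z c"
  have w: "0 \<le> w" "w < c" using rmod_range[OF c] by (auto simp: w_def)
  have f: "rmod (u + z) c = (if u + w < c then u + w else u + w - c)" if "0 \<le> u" "u < c" for u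
  proof -
    have "rmod (u + z) c = rmod (u + w) c" using rmod_add_rmod[OF c, of z u] by (simp add: w_def add.commute)
    also have "\<dots> = (if u + w < c then u + w else u + w - c)"
      using rmod_eq[OF c, of "u+w" 0] rmod_eq[OF c, of "u+w" 1] that w by auto
    finally show ?thesis .
  qed
  define S1 where "S1 = (+) w -` (A \<inter> {w..<c})"
  define S2 where "S2 = (+) (w - c) -` (A \<inter> {0..<w})"
  have eq: "{0..<c} \<inter> (\<lambda>u. rmod (u + z) c) -` A = S1 \<union> S2"
  proof (intro set_eqI iffI)
    fix u assume "u \<in> {0..<c} \<inter> (\<lambda>u. rmod (u + z) c) -` A"
    then show "u \<in> S1 \<union> S2" using f[of u] w by (auto simp: S1_def S2_def add_diff_eq split: if_splits simp: add.commute)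
  next
    fix u assume "u \<in> S1 \<union> S2"
    then show "u \<in> {0..<c} \<inter> (\<lambda>u. rmod (u + z) c) -` A" using f[of u] w by (auto simp: S1_def S2_def add_diff_eq add.commute)
  qed
  have "emeasure lborel (S1 \<union> S2) = emeasure lborel S1 + emeasure lborel S2"
    using A by (intro plus_emeasure[symmetric]) (auto simp: S1_def S2_def)
  also have "\<dots> = emeasure lborel (A \<inter> {w..<c}) + emeasure lborel (A \<inter> {0..<w})"
    unfolding S1_def S2_def using A by (simp only: lborel_transl sets.Int atLeastLessThan_borel)
  also have "\<dots> = emeasure lborel ((A \<inter> {w..<c}) \<union> (A \<inter> {0..<w}))"
    using A by (intro plus_emeasure) auto
  also have "(A \<inter> {w..<c}) \<union> (A \<inter> {0..<w}) = {0..<c} \<inter> A" using w by auto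
  finally show ?thesis using eq by simp
qed

lemma uniform_shift:
  assumes c: "(c::real) > 0"
  shows "distr (uniform_measure lborel {0..<c}) borel (\<lambda>u. rmod (u + z) c) = uniform_measure lborel {0..<c}"
proof (rule measure_eqI)
  fix A assume "A \<in> sets (distr (uniform_measure lborel {0..<c}) borel (\<lambda>u. rmod (u + z) c))"
  then have A: "A \<in> sets borel" by simp
  have mf: "(\<lambda>u. rmod (u + z) c) \<in> borel_measurable borel" by measurable
  have pre: "(\<lambda>u. rmod (u + z) c) -` A \<in> sets borel" using measurable_sets[OF mf A] by simp
  have "emeasure (distr (uniform_measure lborel {0..<c}) borel (\<lambda>u. rmod (u + z) c)) A
     = emeasure (uniform_measure lborel {0..<c}) ((\<lambda>u. rmod (u + z) c) -` A \<inter> space (uniform_measure lborel {0..<c}))"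
    using A by (intro emeasure_distr) auto
  also have "\<dots> = emeasure lborel ({0..<c} \<inter> (\<lambda>u. rmod (u + z) c) -` A) / emeasure lborel {0..<c}"
    using A pre by (subst emeasure_uniform_measure) auto
  also have "\<dots> = emeasure lborel ({0..<c} \<inter> A) / emeasure lborel {0..<c}"
    using key1d[OF c A] by simp
  also have "\<dots> = emeasure (uniform_measure lborel {0..<c}) A"
    using A by (subst emeasure_uniform_measure) auto
  finally show "emeasure (distr (uniform_measure lborel {0..<c}) borel (\<lambda>u. rmod (u + z) c)) A = emeasure (uniform_measure lborel {0..<c}) A" .
qed simp

abbreviation Unif :: "real \<Rightarrow> real measure" where "Unif c \<equiv> uniform_measure lborel {0..<c}"

lemma prob_Unif: "(c::real) > 0 \<Longrightarrow> prob_space (Unif c)"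
  by (rule prob_space_uniform_measure) auto

definition shiftv :: "'i set \<Rightarrow> real \<Rightarrow> ('i \<Rightarrow> real) \<Rightarrow> ('i \<Rightarrow> real) \<Rightarrow> ('i \<Rightarrow> real)" where
  "shiftv I c z y = (\<lambda>i\<in>I. rmod (y i + z i) c)"

lemma measurable_shiftv0: "shiftv I c z \<in> measurable (PiM I (\<lambda>_. borel)) (PiM I (\<lambda>_. borel))"
  unfolding shiftv_def by (intro measurable_restrict) measurable

lemma measurable_shiftv[measurable]: "shiftv I c z \<in> measurable (PiM I (\<lambda>_. Unif c')) (PiM I (\<lambda>_. borel))"
proof -
  have e: "sets (PiM I (\<lambda>_. Unif c')) = sets (PiM I (\<lambda>_. borel))" by (rule sets_PiM_cong) simp_all
  show ?thesis unfolding measurable_cong_sets[OF e refl] by (rule measurable_shiftv0)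
qed

lemma PiM_shift:
  assumes I: "finite I" and c: "(c::real) > 0"
  shows "distr (PiM I (\<lambda>_. Unif c)) (PiM I (\<lambda>_. borel)) (shiftv I c z) = PiM I (\<lambda>_. Unif c)"
proof -
  interpret P: product_prob_space "\<lambda>_. Unif c"
    by (intro product_prob_spaceI prob_Unif c)
  show ?thesis
  proof (rule P.PiM_eqI[OF I])
    show "sets (distr (PiM I (\<lambda>_. Unif c)) (PiM I (\<lambda>_. borel)) (shiftv I c z)) = sets (PiM I (\<lambda>_. Unif c))"
      unfolding sets_distr by (rule sets_PiM_cong) simp_all
    fix A assume A: "\<And>i. i \<in> I \<Longrightarrow> A i \<in> sets (Unif c)"
    have mf: "(\<lambda>u. rmod (u + t) c) \<in> measurable (Unif c) borel" for t by measurable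
    have "emeasure (distr (PiM I (\<lambda>_. Unif c)) (PiM I (\<lambda>_. borel)) (shiftv I c z)) (Pi\<^sub>E I A)
       = emeasure (PiM I (\<lambda>_. Unif c)) (shiftv I c z -` Pi\<^sub>E I A \<inter> space (PiM I (\<lambda>_. Unif c)))"
      using A I by (intro emeasure_distr measurable_shiftv) (auto intro!: sets_PiM_I_finite)
    also have "shiftv I c z -` Pi\<^sub>E I A \<inter> space (PiM I (\<lambda>_. Unif c))
       = Pi\<^sub>E I (\<lambda>i. (\<lambda>u. rmod (u + z i) c) -` A i \<inter> space (Unif c))"
      by (auto simp: shiftv_def space_PiM PiE_def Pi_def extensional_def)
    also have "emeasure (PiM I (\<lambda>_. Unif c)) \<dots> = (\<Prod>i\<in>I. emeasure (Unif c) ((\<lambda>u. rmod (u + z i) c) -` A i \<inter> space (Unif c)))"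
      using A measurable_sets[OF mf] by (intro P.emeasure_PiM I) auto
    also have "\<dots> = (\<Prod>i\<in>I. emeasure (distr (Unif c) borel (\<lambda>u. rmod (u + z i) c)) (A i))"
      using A by (intro prod.cong emeasure_distr[symmetric]) auto
    also have "\<dots> = (\<Prod>i\<in>I. emeasure (Unif c) (A i))"
      by (simp add: uniform_shift[OF c])
    finally show "emeasure (distr (PiM I (\<lambda>_. Unif c)) (PiM I (\<lambda>_. borel)) (shiftv I c z)) (Pi\<^sub>E I A) = (\<Prod>i\<in>I. emeasure (Unif c) (A i))" .
  qed
qed

lemma measurable_shiftv_gen:
  assumes "sets M = sets (PiM I (\<lambda>_. borel))"
  shows "shiftv I c z \<in> measurable M (PiM I (\<lambda>_. borel))"
  unfolding measurable_cong_sets[OF assms refl] by (rule measurable_shiftv0)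

lemma prob_PiM_Unif: "(c::real) > 0 \<Longrightarrow> prob_space (PiM I (\<lambda>_. Unif c))"
  by (intro prob_space_PiM prob_Unif)

lemma haar_unique:
  assumes I: "finite I" and c: "(c::real) > 0" and mu: "prob_space \<mu>"
    and S: "sets \<mu> = sets (PiM I (\<lambda>_. borel))"
    and inv: "\<And>z. distr \<mu> (PiM I (\<lambda>_. borel)) (shiftv I c z) = \<mu>"
  shows "\<mu> = PiM I (\<lambda>_. Unif c)"
proof -
  define L where "L = PiM I (\<lambda>_. Unif c)"
  interpret L: prob_space L unfolding L_def by (rule prob_PiM_Unif[OF c])
  interpret mu: prob_space \<mu> by (rule mu)
  interpret pair_sigma_finite \<mu> L ..
  have SL: "sets L = sets (PiM I (\<lambda>_. borel))" unfolding L_def by (rule sets_PiM_cong) simp_all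
  define h where "h = (\<lambda>p. shiftv I c (snd p) (fst p))"
  have hm0: "h \<in> measurable (PiM I (\<lambda>_. borel) \<Otimes>\<^sub>M PiM I (\<lambda>_. borel)) (PiM I (\<lambda>_. borel))"
    unfolding h_def shiftv_def by (intro measurable_restrict) measurable
  have hm: "h \<in> measurable (\<mu> \<Otimes>\<^sub>M L) (PiM I (\<lambda>_. borel))"
    using hm0 by (subst measurable_cong_sets[OF sets_pair_measure_cong[OF S SL] refl])
  show ?thesis
  proof (rule measure_eqI)
    show "sets \<mu> = sets (PiM I (\<lambda>_. Unif c))" using SL S by (simp add: L_def)
    fix A assume "A \<in> sets \<mu>"
    then have A: "A \<in> sets (PiM I (\<lambda>_. borel))" using S by simp
    define X where "X = h -` A \<inter> space (\<mu> \<Otimes>\<^sub>M L)"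
    have X: "X \<in> sets (\<mu> \<Otimes>\<^sub>M L)" unfolding X_def by (rule measurable_sets[OF hm A])
    have "emeasure (\<mu> \<Otimes>\<^sub>M L) X = (\<integral>\<^sup>+y. emeasure \<mu> ((\<lambda>x. (x, y)) -` X) \<partial>L)"
      by (rule emeasure_pair_measure_alt2[OF X])
    also have "\<dots> = (\<integral>\<^sup>+y. emeasure \<mu> A \<partial>L)"
    proof (rule nn_integral_cong)
      fix y assume y: "y \<in> space L"
      have "(\<lambda>x. (x, y)) -` X = shiftv I c y -` A \<inter> space \<mu>"
        using y by (auto simp: X_def h_def space_pair_measure)
      also have "emeasure \<mu> \<dots> = emeasure (distr \<mu> (PiM I (\<lambda>_. borel)) (shiftv I c y)) A"
        using A by (intro emeasure_distr[symmetric] measurable_shiftv_gen S)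
      also have "\<dots> = emeasure \<mu> A" by (simp add: inv)
      finally show "emeasure \<mu> ((\<lambda>x. (x, y)) -` X) = emeasure \<mu> A" .
    qed
    also have "\<dots> = emeasure \<mu> A" by (simp add: L.emeasure_space_1)
    finally have 1: "emeasure (\<mu> \<Otimes>\<^sub>M L) X = emeasure \<mu> A" .
    have "emeasure (\<mu> \<Otimes>\<^sub>M L) X = (\<integral>\<^sup>+x. emeasure L (Pair x -` X) \<partial>\<mu>)"
      by (rule L.emeasure_pair_measure_alt[OF X])
    also have "\<dots> = (\<integral>\<^sup>+x. emeasure L A \<partial>\<mu>)"
    proof (rule nn_integral_cong)
      fix x assume x: "x \<in> space \<mu>"
      have "Pair x -` X = shiftv I c x -` A \<inter> space L"
        using x by (auto simp: X_def h_def space_pair_measure shiftv_def add.commute)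
      also have "emeasure L \<dots> = emeasure (distr L (PiM I (\<lambda>_. borel)) (shiftv I c x)) A"
        using A by (intro emeasure_distr[symmetric] measurable_shiftv_gen SL)
      also have "\<dots> = emeasure L A" unfolding L_def by (simp add: PiM_shift[OF I c])
      finally show "emeasure L (Pair x -` X) = emeasure L A" .
    qed
    also have "\<dots> = emeasure L A" by (simp add: mu.emeasure_space_1)
    finally show "emeasure \<mu> A = emeasure (PiM I (\<lambda>_. Unif c)) A" using 1 by (simp add: L_def)
  qed
qed

definition Dsum :: "nat set \<Rightarrow> (nat \<times> nat) set \<Rightarrow> nat \<Rightarrow> (nat \<times> nat \<Rightarrow> real) \<Rightarrow> real" where
  "Dsum V E i r = (\<Sum>j\<in>{j\<in>V. (j, i) \<in> E}. r (j, i)) - (\<Sum>j\<in>{j\<in>V. (i, j) \<in> E}. r (i, j))"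

lemma Dsum_add: "Dsum V E i (\<lambda>e. f e + g e) = Dsum V E i f + Dsum V E i g"
  by (simp add: Dsum_def sum.distrib)

lemma Dsum_diff: "Dsum V E i (\<lambda>e. f e - g e) = Dsum V E i f - Dsum V E i g"
  by (simp add: Dsum_def sum_subtractf)

lemma Dsum_scale: "Dsum V E i (\<lambda>e. k * f e) = k * Dsum V E i f"
  by (simp add: Dsum_def sum_distrib_left right_diff_distrib)

lemma Dsum_sum: "Dsum V E i (\<lambda>e. \<Sum>k\<in>K. f k e) = (\<Sum>k\<in>K. Dsum V E i (f k))"
  by (simp add: Dsum_def sum_subtractf sum.swap[of _ K])

lemma Dsum_int: "Dsum V E i (\<lambda>e. of_int (g e)) = of_int ((\<Sum>j\<in>{j\<in>V. (j, i) \<in> E}. g (j, i)) - (\<Sum>j\<in>{j\<in>V. (i, j) \<in> E}. g (i, j)))"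
  by (simp add: Dsum_def)

lemma Dsum_restrict: "Dsum V E i (restrict g E) = Dsum V E i g"
  by (simp add: Dsum_def)

lemma Dsum_zero: "Dsum V E i (\<lambda>e. 0) = 0"
  by (simp add: Dsum_def)

lemma Dsum_delta:
  assumes "finite V" "(p, q) \<in> E" "p \<in> V" "q \<in> V"
  shows "Dsum V E i (\<lambda>e. if e = (p, q) then 1 else 0) = (if i = q then 1 else 0) - (if i = p then 1 else 0)"
proof -
  have 1: "(\<Sum>j\<in>{j\<in>V. (j, i) \<in> E}. if (j, i) = (p, q) then 1 else (0::real)) = (if i = q then 1 else 0)"
    using assms by (simp add: sum.delta')
  have 2: "(\<Sum>j\<in>{j\<in>V. (i, j) \<in> E}. if (i, j) = (p, q) then 1 else (0::real)) = (if i = p then 1 else 0)"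
    using assms by (simp add: sum.delta')
  show ?thesis unfolding Dsum_def using 1 2 by simp
qed

lemma Dsum_unit:
  assumes V: "finite V" and E: "E \<subseteq> V \<times> V" and k: "(k, \<rho>) \<in> (E \<union> E\<inverse>)\<^sup>*"
  shows "\<exists>w. \<forall>i. Dsum V E i w = (if i = k then 1 else 0) - (if i = \<rho> then 1 else 0)"
  using k
proof (induction rule: converse_rtrancl_induct)
  case base
  show ?case by (rule exI[of _ "\<lambda>e. 0"]) (simp add: Dsum_zero)
next
  case (step k l)
  then obtain w where w: "\<And>i. Dsum V E i w = (if i = l then 1 else 0) - (if i = \<rho> then 1 else 0)" by blast
  from step(1) show ?case
  proof
    assume kl: "(k, l) \<in> E"
    then have "k \<in> V" "l \<in> V" using E by auto
    show ?case
      by (rule exI[of _ "\<lambda>e. w e - (if e = (k, l) then 1 else 0)"])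
         (simp add: Dsum_diff w Dsum_delta[OF V kl \<open>k \<in> V\<close> \<open>l \<in> V\<close>])
  next
    assume "(k, l) \<in> E\<inverse>"
    then have lk: "(l, k) \<in> E" by simp
    then have "k \<in> V" "l \<in> V" using E by auto
    show ?case
      by (rule exI[of _ "\<lambda>e. w e + (if e = (l, k) then 1 else 0)"])
         (simp add: Dsum_add w Dsum_delta[OF V lk \<open>l \<in> V\<close> \<open>k \<in> V\<close>])
  qed
qed

lemma Dsum_surj:
  assumes V: "finite V" and E: "E \<subseteq> V \<times> V" and S: "finite S" "\<rho> \<notin> S"
    and conn: "\<And>k. k \<in> S \<Longrightarrow> (k, \<rho>) \<in> (E \<union> E\<inverse>)\<^sup>*"
  shows "\<exists>w. \<forall>i\<in>S. Dsum V E i w = z i"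
proof -
  have "\<forall>k\<in>S. \<exists>w. \<forall>i. Dsum V E i w = (if i = k then 1 else 0) - (if i = \<rho> then 1 else 0)"
    using Dsum_unit[OF V E conn] by blast
  then obtain W where W: "\<And>k i. k \<in> S \<Longrightarrow> Dsum V E i (W k) = (if i = k then 1 else 0) - (if i = \<rho> then 1 else 0)"
    by metis
  show ?thesis
  proof (intro exI ballI)
    fix i assume i: "i \<in> S"
    have "Dsum V E i (\<lambda>e. \<Sum>k\<in>S. z k * W k e) = (\<Sum>k\<in>S. z k * Dsum V E i (W k))"
      by (simp add: Dsum_sum Dsum_scale)
    also have "\<dots> = (\<Sum>k\<in>S. if k = i then z k else 0)"
      using i S by (intro sum.cong) (auto simp: W)
    also have "\<dots> = z i" using i S by simp
    finally show "Dsum V E i (\<lambda>e. \<Sum>k\<in>S. z k * W k e) = z i" .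
  qed
qed

lemma measurable_Dsum[measurable]: "(\<lambda>r. Dsum V E i r) \<in> borel_measurable (PiM E (\<lambda>_. Unif c))"
  unfolding Dsum_def by measurable

lemma measurable_Psi: "(\<lambda>r. \<lambda>i\<in>S. rmod (b i + Dsum V E i r) c) \<in> measurable (PiM E (\<lambda>_. Unif c)) (PiM S (\<lambda>_. borel))"
  by (intro measurable_restrict) measurable

lemma main_gen:
  assumes V: "finite V" and E: "E \<subseteq> V \<times> V" and S: "finite S" "\<rho> \<notin> S"
    and conn: "\<And>k. k \<in> S \<Longrightarrow> (k, \<rho>) \<in> (E \<union> E\<inverse>)\<^sup>*" and c: "(c::real) > 0"
  shows "distr (PiM E (\<lambda>_. Unif c)) (PiM S (\<lambda>_. borel)) (\<lambda>r. \<lambda>i\<in>S. rmod (b i + Dsum V E i r) c)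
         = PiM S (\<lambda>_. Unif c)"
proof -
  define P where "P = PiM E (\<lambda>_. Unif c)"
  define \<Psi> where "\<Psi> = (\<lambda>r. \<lambda>i\<in>S. rmod (b i + Dsum V E i r) c)"
  have Ef: "finite E" using V E by (meson finite_SigmaI finite_subset)
  interpret P: prob_space P unfolding P_def by (rule prob_PiM_Unif[OF c])
  have Pm: "\<Psi> \<in> measurable P (PiM S (\<lambda>_. borel))" unfolding P_def \<Psi>_def by (rule measurable_Psi)
  show ?thesis unfolding P_def[symmetric] \<Psi>_def[symmetric]
  proof (rule haar_unique[OF S(1) c])
    show "prob_space (distr P (PiM S (\<lambda>_. borel)) \<Psi>)" by (rule P.prob_space_distr[OF Pm])
    show "sets (distr P (PiM S (\<lambda>_. borel)) \<Psi>) = sets (PiM S (\<lambda>_. borel))" by simp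
    fix z
    obtain w where w: "\<And>i. i \<in> S \<Longrightarrow> Dsum V E i w = z i" using Dsum_surj[OF V E S conn] by blast
    have shm: "shiftv E c w \<in> measurable P (PiM E (\<lambda>_. borel))" unfolding P_def by (rule measurable_shiftv)
    have shm2: "shiftv S c z \<in> measurable (PiM S (\<lambda>_. borel)) (PiM S (\<lambda>_. borel))" by (rule measurable_shiftv0)
    have Pm2: "\<Psi> \<in> measurable (PiM E (\<lambda>_. borel)) (PiM S (\<lambda>_. borel))"
    proof -
      have e: "sets (PiM E (\<lambda>_. borel)) = sets P" unfolding P_def by (rule sets_PiM_cong) simp_all
      show ?thesis unfolding measurable_cong_sets[OF e refl] by (rule Pm)
    qed
    have pt: "shiftv S c z (\<Psi> r) = \<Psi> (shiftv E c w r)" for r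
    proof (rule ext)
      fix i
      show "shiftv S c z (\<Psi> r) i = \<Psi> (shiftv E c w r) i"
      proof (cases "i \<in> S")
        case True
        define k where "k = (\<lambda>e. \<lfloor>(r e + w e) / c\<rfloor>)"
        have "Dsum V E i (shiftv E c w r) = Dsum V E i (\<lambda>e. rmod (r e + w e) c)"
          unfolding shiftv_def by (rule Dsum_restrict)
        also have "(\<lambda>e. rmod (r e + w e) c) = (\<lambda>e. (r e + w e) - c * of_int (k e))"
          by (simp add: rmod_def k_def)
        also have "Dsum V E i \<dots> = Dsum V E i r + z i - c * Dsum V E i (\<lambda>e. of_int (k e))"
          by (simp add: Dsum_diff Dsum_add Dsum_scale w[OF True])
        finally obtain n where n: "Dsum V E i (shiftv E c w r) = Dsum V E i r + z i - c * of_int n"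
          by (simp only: Dsum_int)
        have "shiftv S c z (\<Psi> r) i = rmod (rmod (b i + Dsum V E i r) c + z i) c"
          using True by (simp add: shiftv_def \<Psi>_def)
        also have "\<dots> = rmod (b i + Dsum V E i r + z i) c" by (rule rmod_add_rmod[OF c])
        also have "\<dots> = rmod (b i + Dsum V E i (shiftv E c w r)) c"
          by (rule rmod_cong[OF c, of _ _ n]) (simp add: n algebra_simps)
        also have "\<dots> = \<Psi> (shiftv E c w r) i" using True by (simp add: \<Psi>_def)
        finally show ?thesis .
      qed (simp add: shiftv_def \<Psi>_def)
    qed
    have "distr (distr P (PiM S (\<lambda>_. borel)) \<Psi>) (PiM S (\<lambda>_. borel)) (shiftv S c z)
        = distr P (PiM S (\<lambda>_. borel)) (shiftv S c z \<circ> \<Psi>)"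
      by (rule distr_distr[OF shm2 Pm])
    also have "\<dots> = distr P (PiM S (\<lambda>_. borel)) (\<Psi> \<circ> shiftv E c w)"
      by (simp add: comp_def pt)
    also have "\<dots> = distr (distr P (PiM E (\<lambda>_. borel)) (shiftv E c w)) (PiM S (\<lambda>_. borel)) \<Psi>"
      by (rule distr_distr[OF Pm2 shm, symmetric])
    also have "distr P (PiM E (\<lambda>_. borel)) (shiftv E c w) = P"
      unfolding P_def by (rule PiM_shift[OF Ef c])
    finally show "distr (distr P (PiM S (\<lambda>_. borel)) \<Psi>) (PiM S (\<lambda>_. borel)) (shiftv S c z) = distr P (PiM S (\<lambda>_. borel)) \<Psi>" .
  qed
qed

lemma Dsum_total: "finite V \<Longrightarrow> (\<Sum>i\<in>V. Dsum V E i r) = 0"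
proof -
  assume V: "finite V"
  have "(\<Sum>i\<in>V. Dsum V E i r) = (\<Sum>i\<in>V. \<Sum>j\<in>V. if (j, i) \<in> E then r (j, i) else 0)
        - (\<Sum>i\<in>V. \<Sum>j\<in>V. if (i, j) \<in> E then r (i, j) else 0)"
    using V by (simp add: Dsum_def sum_subtractf sum.inter_filter)
  also have "(\<Sum>i\<in>V. \<Sum>j\<in>V. if (i, j) \<in> E then r (i, j) else 0) = (\<Sum>i\<in>V. \<Sum>j\<in>V. if (j, i) \<in> E then r (j, i) else 0)"
    by (rule sum.swap)
  finally show ?thesis by simp
qed

theorem lemma2:
  fixes m :: nat and a :: real and E :: "(nat \<times> nat) set" and x :: "nat \<Rightarrow> real"
  assumes "m \<ge> 1"
    and "a > 0"
    and "E \<subseteq> {1..m} \<times> {1..m}"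
    and "\<And>i. i \<in> {1..m} \<Longrightarrow> x i \<in> {0..<a}"
    and "undirected_connected {1..m} E"
  shows "distr (PiM E (\<lambda>_. uniform_measure lborel {0..<real m * a}))
               (PiM {1..m} (\<lambda>_. borel))
               (perturbed m a E x)
         = constrained_uniform m (real m * a) (\<Sum>i\<in>{1..m}. x i)"
proof -
  define c where "c = real m * a"
  have c: "c > 0" using assms(1,2) by (simp add: c_def)
  define V where "V = {1..m}"
  define S where "S = {1..<m}"
  define s where "s = (\<Sum>i\<in>{1..m}. x i)"
  define \<Psi> where "\<Psi> = (\<lambda>r. \<lambda>i\<in>S. rmod (x i + Dsum V E i r) c)"
  define G where "G = (\<lambda>y. restrict (y(m := rmod (s - (\<Sum>i\<in>{1..<m}. y i)) c)) {1..m})"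
  have VS: "V = insert m S" "m \<notin> S" "finite S" "finite V" using assms(1) by (auto simp: V_def S_def)
  have conn: "(k, m) \<in> (E \<union> E\<inverse>)\<^sup>*" if "k \<in> S" for k
    using assms(1,5) that by (auto simp: undirected_connected_def S_def)
  have tsh: "tshift m a E i r = rmod (Dsum V E i r) c" for i r
    by (simp add: tshift_def Dsum_def V_def c_def)
  have pert: "perturbed m a E x r i = (if i \<in> V then rmod (x i + Dsum V E i r) c else undefined)" for r i
    using rmod_add_rmod[OF c, of "Dsum V E i r" "x i"]
    by (simp add: perturbed_def tsh add.commute V_def c_def)
  have eqf: "perturbed m a E x = G \<circ> \<Psi>"
  proof (intro ext)
    fix r i
    show "perturbed m a E x r i = (G \<circ> \<Psi>) r i"
    proof (cases "i = m")
      case True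
      define k where "k = (\<lambda>i. \<lfloor>(x i + Dsum V E i r) / c\<rfloor>)"
      have rm: "rmod (x i + Dsum V E i r) c = x i + Dsum V E i r - c * of_int (k i)" for i
        by (simp add: rmod_def k_def)
      have tot: "Dsum V E m r + (\<Sum>i\<in>S. Dsum V E i r) = 0"
        using Dsum_total[OF VS(4), of E r] VS by simp
      have sx: "s = x m + (\<Sum>i\<in>S. x i)" unfolding s_def V_def[symmetric] using VS by simp
      have "(\<Sum>i\<in>{1..<m}. \<Psi> r i) = (\<Sum>i\<in>S. x i + Dsum V E i r - c * of_int (k i))"
        unfolding S_def[symmetric] by (intro sum.cong) (auto simp: \<Psi>_def rm)
      also have "\<dots> = (\<Sum>i\<in>S. x i) + (\<Sum>i\<in>S. Dsum V E i r) - c * of_int (\<Sum>i\<in>S. k i)"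
        by (simp add: sum.distrib sum_subtractf sum_distrib_left)
      finally have "s - (\<Sum>i\<in>{1..<m}. \<Psi> r i) = (x m + Dsum V E m r) + c * of_int (\<Sum>i\<in>S. k i)"
        using tot sx by simp
      then have "rmod (s - (\<Sum>i\<in>{1..<m}. \<Psi> r i)) c = rmod (x m + Dsum V E m r) c"
        by (intro rmod_cong[OF c, of _ _ "\<Sum>i\<in>S. k i"]) simp
      then show ?thesis using True VS by (simp add: pert G_def V_def)
    next
      case False
      then show ?thesis using VS by (auto simp: pert G_def \<Psi>_def V_def S_def)
    qed
  qed
  have Gm: "G \<in> measurable (PiM S (\<lambda>_. borel)) (PiM {1..m} (\<lambda>_. borel))"
  proof -
    have "G = (\<lambda>y. \<lambda>i\<in>{1..m}. if i = m then rmod (s - (\<Sum>j\<in>S. y j)) c else y i)"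
      unfolding G_def S_def by (intro ext) (simp add: restrict_def)
    also have "\<dots> \<in> measurable (PiM S (\<lambda>_. borel)) (PiM {1..m} (\<lambda>_. borel))"
    proof (intro measurable_restrict)
      fix i assume i: "i \<in> {1..m}"
      show "(\<lambda>y. if i = m then rmod (s - (\<Sum>j\<in>S. y j)) c else y i) \<in> measurable (PiM S (\<lambda>_. borel)) borel"
      proof (cases "i = m")
        case True then show ?thesis by simp measurable
      next
        case False
        then have "i \<in> S" using i by (auto simp: S_def)
        with False show ?thesis by simp measurable
      qed
    qed
    finally show ?thesis .
  qed
  have Pm: "\<Psi> \<in> measurable (PiM E (\<lambda>_. Unif c)) (PiM S (\<lambda>_. borel))"
    unfolding \<Psi>_def by (rule measurable_Psi)
  have E': "E \<subseteq> V \<times> V" using assms(3) by (simp add: V_def)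
  have "distr (PiM E (\<lambda>_. Unif c)) (PiM {1..m} (\<lambda>_. borel)) (perturbed m a E x)
      = distr (distr (PiM E (\<lambda>_. Unif c)) (PiM S (\<lambda>_. borel)) \<Psi>) (PiM {1..m} (\<lambda>_. borel)) G"
    unfolding eqf by (rule distr_distr[OF Gm Pm, symmetric])
  also have "distr (PiM E (\<lambda>_. Unif c)) (PiM S (\<lambda>_. borel)) \<Psi> = PiM S (\<lambda>_. Unif c)"
    unfolding \<Psi>_def by (rule main_gen[OF VS(4) E' VS(3) VS(2) conn c])
  also have "distr (PiM S (\<lambda>_. Unif c)) (PiM {1..m} (\<lambda>_. borel)) G = constrained_uniform m c s"
    by (simp add: constrained_uniform_def G_def S_def)
  finally show ?thesis by (simp add: c_def s_def)
qed

end
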